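(* Let $P=(P_1,\ldots,P_n)$ be a profile of linear orders on a finite set $A$ with voter set $N=\{1,\ldots,n\}$, and let $i\in N$ be a potential leaf of $P$. Let $P_{-i}$ denote the profile obtained from $P$ by removing voter $i$. Then $P$ is single-crossing with respect to some tree on $N$ if and only if $P_{-i}$ is single-crossing with respect to some tree on $N\setminus\{i\}$.
   Context: Voter $j$ prefers $a$ to $b$ is written $a\succ_j b$. Given a tree $T=(V,E)$ on a voter set $V$, a profile is single-crossing with respect to $T$ if for every pair of distinct alternatives $a,b$ one of the following holds: (i) there is an edge $e\in E$ such that, removing $e$ from $T$, the two resulting subtrees have vertex sets $V_1,V_2$ with all voters in $V_1$ preferring $a$ to $b$ and all voters in $V_2$ preferring $b$ to $a$; or (ii) all voters prefer $a$ to $b$, or all voters prefer $b$ to $a$. A voter $i\in N$ is a potential leaf of $P$ if (a) the set $S_i=\{(a,b)\in A^2: a\succ_i b \text{ and } b\succ_j a \text{ for all } j\ne i\}$ is nonempty, and (b) there exists $k\in N$, $k\ne i$, such that $a\succ_i b\Leftrightarrow a\succ_k b$ for all $a,b\in A$ such that neither $(a,b)$ nor $(b,a)$ belongs to $S_i$. *)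

theory Defs
  imports Main
begin

definition adj :: "'v set set \<Rightarrow> 'v \<Rightarrow> 'v \<Rightarrow> bool" where
  "adj E u v \<longleftrightarrow> {u, v} \<in> E"

definition reach :: "'v set set \<Rightarrow> 'v \<Rightarrow> 'v \<Rightarrow> bool" where
  "reach E = (adj E)\<^sup>*\<^sup>*"

definition is_graph :: "'v set \<Rightarrow> 'v set set \<Rightarrow> bool" where
  "is_graph V E \<longleftrightarrow> (\<forall>e\<in>E. \<exists>u\<in>V. \<exists>v\<in>V. u \<noteq> v \<and> e = {u, v})"

definition connected_graph :: "'v set \<Rightarrow> 'v set set \<Rightarrow> bool" where
  "connected_graph V E \<longleftrightarrow> (\<forall>u\<in>V. \<forall>v\<in>V. reach E u v)"

text \<open>A tree: a nonempty finite connected graph without cycles, i.e. one in which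
  every edge lies on no cycle (removing any edge disconnects its endpoints).\<close>

definition is_tree :: "'v set \<Rightarrow> 'v set set \<Rightarrow> bool" where
  "is_tree V E \<longleftrightarrow> finite V \<and> V \<noteq> {} \<and> is_graph V E \<and> connected_graph V E \<and>
     (\<forall>u v. {u, v} \<in> E \<longrightarrow> \<not> reach (E - {{u, v}}) u v)"

definition component :: "'v set \<Rightarrow> 'v set set \<Rightarrow> 'v set \<Rightarrow> 'v \<Rightarrow> 'v set" where
  "component V E e u = {w \<in> V. reach (E - {e}) u w}"

text \<open>A profile: P j is the strict preference of voter j, (a,b) \<in> P j meaning a \<succ>_j b.\<close>

definition profile :: "'v set \<Rightarrow> 'a set \<Rightarrow> ('v \<Rightarrow> ('a \<times> 'a) set) \<Rightarrow> bool" where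
  "profile N A P \<longleftrightarrow> (\<forall>j\<in>N. strict_linear_order_on A (P j) \<and> P j \<subseteq> A \<times> A)"

definition single_crossing_wrt :: "'v set \<Rightarrow> 'v set set \<Rightarrow> 'a set \<Rightarrow> ('v \<Rightarrow> ('a \<times> 'a) set) \<Rightarrow> bool" where
  "single_crossing_wrt V E A P \<longleftrightarrow>
     (\<forall>a\<in>A. \<forall>b\<in>A. a \<noteq> b \<longrightarrow>
        (\<exists>u v. {u, v} \<in> E \<and>
            (\<forall>w\<in>component V E {u, v} u. (a, b) \<in> P w) \<and>
            (\<forall>w\<in>component V E {u, v} v. (b, a) \<in> P w))
      \<or> (\<forall>j\<in>V. (a, b) \<in> P j) \<or> (\<forall>j\<in>V. (b, a) \<in> P j))"

definition S_set :: "'v set \<Rightarrow> 'a set \<Rightarrow> ('v \<Rightarrow> ('a \<times> 'a) set) \<Rightarrow> 'v \<Rightarrow> ('a \<times> 'a) set" where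
  "S_set N A P i = {(a, b) \<in> A \<times> A. (a, b) \<in> P i \<and> (\<forall>j\<in>N. j \<noteq> i \<longrightarrow> (b, a) \<in> P j)}"

definition potential_leaf :: "'v set \<Rightarrow> 'a set \<Rightarrow> ('v \<Rightarrow> ('a \<times> 'a) set) \<Rightarrow> 'v \<Rightarrow> bool" where
  "potential_leaf N A P i \<longleftrightarrow> i \<in> N \<and> S_set N A P i \<noteq> {} \<and>
     (\<exists>k\<in>N. k \<noteq> i \<and> (\<forall>a\<in>A. \<forall>b\<in>A.
        (a, b) \<notin> S_set N A P i \<and> (b, a) \<notin> S_set N A P i \<longrightarrow>
          ((a, b) \<in> P i \<longleftrightarrow> (a, b) \<in> P k)))"

end

theory Submission
  imports Defs
begin

lemma reach_refl: "reach E u u"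
  by (simp add: reach_def)

lemma reach_mono: "F \<subseteq> G \<Longrightarrow> reach F u w \<Longrightarrow> reach G u w"
  unfolding reach_def
  by (erule rtranclp_mono[THEN predicate2D, rotated]) (auto simp: adj_def)

lemma reach_edge: "{u,w} \<in> E \<Longrightarrow> reach E u w"
  unfolding reach_def by (rule r_into_rtranclp) (simp add: adj_def)

lemma reach_trans: "reach E u v \<Longrightarrow> reach E v w \<Longrightarrow> reach E u w"
  unfolding reach_def by (rule rtranclp_trans)

lemma reach_sym: "reach E u w \<Longrightarrow> reach E w u"
  unfolding reach_def
proof (induction rule: rtranclp_induct)
  case base then show ?case by simp
next
  case (step y z)
  have "adj E z y" using step(2) by (simp add: adj_def insert_commute)
  then show ?case using step(3) by (rule converse_rtranclp_into_rtranclp)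
qed

lemma reach_isolated: assumes "\<forall>e\<in>F. x \<notin> e" "reach F x y" shows "y = x"
  using assms(2) unfolding reach_def
proof (induction rule: rtranclp_induct)
  case base then show ?case by simp
next
  case (step y z)
  then show ?case using assms(1) by (auto simp: adj_def)
qed

lemma reach_proj:
  assumes "\<forall>e\<in>F. i \<notin> e" and "reach (insert {i,k} F) u w"
  shows "reach F (if u = i then k else u) (if w = i then k else w)"
  using assms(2) unfolding reach_def
proof (induction rule: rtranclp_induct)
  case base then show ?case by simp
next
  case (step y z)
  show ?case
  proof (cases "{y,z} = {i,k}")
    case True
    then have "(if y = i then k else y) = (if z = i then k else z)"
      by (auto simp: doubleton_eq_iff)
    then show ?thesis using step(3) by simp
  next
    case False
    then have "{y,z} \<in> F" using step(2) by (simp add: adj_def)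
    then have "y \<noteq> i" "z \<noteq> i" "adj F y z" using assms(1) by (auto simp: adj_def)
    then show ?thesis using step(3) by (simp add: rtranclp.rtrancl_into_rtrancl)
  qed
qed

lemma edge_props: "is_graph V E \<Longrightarrow> {u,v} \<in> E \<Longrightarrow> u \<in> V \<and> v \<in> V \<and> u \<noteq> v"
  unfolding is_graph_def by (drule bspec) (auto simp: doubleton_eq_iff)

lemma prof_asym: "profile N A P \<Longrightarrow> j \<in> N \<Longrightarrow> (a,b) \<in> P j \<Longrightarrow> (b,a) \<notin> P j"
  unfolding profile_def strict_linear_order_on_def irrefl_def
  by (metis transD)

lemma forward:
  assumes prof: "profile V A P" and pl: "potential_leaf V A P i"
    and T: "is_tree V E" and sc: "single_crossing_wrt V E A P"
  shows "\<exists>E'. is_tree (V - {i}) E' \<and> single_crossing_wrt (V - {i}) E' A P"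
proof -
  from pl have iV: "i \<in> V" and Sne: "S_set V A P i \<noteq> {}"
    and "\<exists>k\<in>V. k \<noteq> i" by (auto simp: potential_leaf_def)
  then obtain k where kV: "k \<in> V" and ki: "k \<noteq> i" by blast
  from Sne obtain a b where ab: "(a,b) \<in> S_set V A P i" by auto
  hence abA: "a \<in> A" "b \<in> A" and abi: "(a,b) \<in> P i"
    and oth: "\<forall>j\<in>V. j \<noteq> i \<longrightarrow> (b,a) \<in> P j" by (auto simp: S_set_def)
  have "a \<noteq> b" using prof_asym[OF prof iV abi] abi by auto
  from T have finV: "finite V" and graph: "is_graph V E" and conn: "connected_graph V E"
    and acyc: "\<forall>u v. {u, v} \<in> E \<longrightarrow> \<not> reach (E - {{u, v}}) u v"
    by (auto simp: is_tree_def)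
  have n1: "\<not> (\<forall>j\<in>V. (a,b) \<in> P j)" using prof_asym[OF prof kV] oth kV ki by blast
  have n2: "\<not> (\<forall>j\<in>V. (b,a) \<in> P j)" using prof_asym[OF prof iV abi] iV by blast
  from sc abA \<open>a \<noteq> b\<close> n1 n2 obtain u v where uvE: "{u,v} \<in> E"
    and cu: "\<forall>w\<in>component V E {u,v} u. (a,b) \<in> P w"
    unfolding single_crossing_wrt_def by blast
  from edge_props[OF graph uvE] have uV: "u \<in> V" and vV: "v \<in> V" and uv: "u \<noteq> v" by auto
  have "u \<in> component V E {u,v} u" using uV by (simp add: component_def reach_refl)
  hence "(a,b) \<in> P u" using cu by blast
  hence ui: "u = i" using oth prof_asym[OF prof uV] uV by blast
  define E' where "E' = E - {{i,v}}"
  have noi: "\<forall>e\<in>E'. i \<notin> e"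
  proof (intro ballI notI)
    fix e assume eE': "e \<in> E'" and ie: "i \<in> e"
    hence eE: "e \<in> E" and ne: "e \<noteq> {i,v}" by (auto simp: E'_def)
    from graph eE obtain p q where pq: "p \<in> V" "q \<in> V" "p \<noteq> q" "e = {p,q}"
      unfolding is_graph_def by blast
    then obtain x where ex: "e = {i,x}" "x \<noteq> i" "x \<in> V" using ie by auto
    have "reach E' i x" using eE' ex by (simp add: reach_edge)
    hence "x \<in> component V E {u,v} u" using ex ui by (simp add: component_def E'_def)
    hence "(a,b) \<in> P x" using cu by blast
    thus False using oth prof_asym[OF prof \<open>x \<in> V\<close>] ex by blast
  qed
  have Eeq: "E = insert {i,v} E'" using uvE ui by (auto simp: E'_def)
  have vi: "v \<noteq> i" using uv ui by simp
  have conn': "\<forall>x\<in>V-{i}. \<forall>y\<in>V-{i}. reach E' x y"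
  proof (intro ballI)
    fix x y assume "x \<in> V-{i}" "y \<in> V-{i}"
    moreover have r: "reach (insert {i,v} E') x y" using conn Eeq \<open>x \<in> V-{i}\<close> \<open>y \<in> V-{i}\<close>
      by (auto simp: connected_graph_def)
    ultimately show "reach E' x y" using reach_proj[OF noi r] by simp
  qed
  have tree': "is_tree (V - {i}) E'"
    unfolding is_tree_def
  proof (intro conjI)
    show "finite (V - {i})" using finV by simp
    show "V - {i} \<noteq> {}" using vV vi by auto
    show "is_graph (V - {i}) E'"
      unfolding is_graph_def
    proof
      fix e assume eE': "e \<in> E'"
      hence "e \<in> E" by (simp add: E'_def)
      with graph obtain p q where pq: "p \<in> V" "q \<in> V" "p \<noteq> q" "e = {p,q}"
        unfolding is_graph_def by blast
      moreover have "i \<notin> e" using noi eE' by blast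
      ultimately show "\<exists>u\<in>V - {i}. \<exists>v\<in>V - {i}. u \<noteq> v \<and> e = {u, v}" by auto
    qed
    show "connected_graph (V - {i}) E'" using conn' by (simp add: connected_graph_def)
    show "\<forall>u v. {u, v} \<in> E' \<longrightarrow> \<not> reach (E' - {{u, v}}) u v"
    proof (intro allI impI notI)
      fix x y assume "{x,y} \<in> E'" "reach (E' - {{x,y}}) x y"
      moreover have "E' - {{x,y}} \<subseteq> E - {{x,y}}" by (auto simp: E'_def)
      ultimately show False using acyc reach_mono by (metis DiffD1 E'_def)
    qed
  qed
  have sc': "single_crossing_wrt (V - {i}) E' A P"
    unfolding single_crossing_wrt_def
  proof (intro ballI impI)
    fix c d assume cA: "c \<in> A" and dA: "d \<in> A" and cd: "c \<noteq> d"
    from sc cA dA cd have "(\<exists>x y. {x, y} \<in> E \<and>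
            (\<forall>w\<in>component V E {x, y} x. (c, d) \<in> P w) \<and>
            (\<forall>w\<in>component V E {x, y} y. (d, c) \<in> P w))
      \<or> (\<forall>j\<in>V. (c, d) \<in> P j) \<or> (\<forall>j\<in>V. (d, c) \<in> P j)"
      unfolding single_crossing_wrt_def by blast
    then show "(\<exists>x y. {x, y} \<in> E' \<and>
            (\<forall>w\<in>component (V - {i}) E' {x, y} x. (c, d) \<in> P w) \<and>
            (\<forall>w\<in>component (V - {i}) E' {x, y} y. (d, c) \<in> P w))
      \<or> (\<forall>j\<in>V - {i}. (c, d) \<in> P j) \<or> (\<forall>j\<in>V - {i}. (d, c) \<in> P j)"
    proof (elim disjE exE conjE)
      fix x y assume xyE: "{x,y} \<in> E"
        and cx: "\<forall>w\<in>component V E {x, y} x. (c, d) \<in> P w"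
        and cy: "\<forall>w\<in>component V E {x, y} y. (d, c) \<in> P w"
      show ?thesis
      proof (cases "{x,y} = {i,v}")
        case True
        have comp: "V - {i} \<subseteq> component V E {i,v} v"
          using conn' vV vi by (auto simp: component_def E'_def)
        from True have "(x = i \<and> y = v) \<or> (x = v \<and> y = i)" by (auto simp: doubleton_eq_iff)
        then show ?thesis
        proof
          assume "x = i \<and> y = v"
          then show ?thesis using cy comp by blast
        next
          assume xy: "x = v \<and> y = i"
          have "{v,i} = {i,v}" by auto
          hence "\<forall>w\<in>component V E {i,v} v. (c, d) \<in> P w" using cx xy by simp
          then show ?thesis using comp by blast
        qed
      next
        case False
        hence xyE': "{x,y} \<in> E'" using xyE by (simp add: E'_def)
        have sub: "\<And>z. component (V - {i}) E' {x,y} z \<subseteq> component V E {x,y} z"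
          unfolding component_def
          by (auto elim!: reach_mono[rotated] simp: E'_def)
        show ?thesis using xyE' cx cy sub by blast
      qed
    qed blast+
  qed
  show ?thesis using tree' sc' by blast
qed

lemma backward:
  assumes prof: "profile V A P" and pl: "potential_leaf V A P i"
    and T': "is_tree (V - {i}) E'" and sc': "single_crossing_wrt (V - {i}) E' A P"
  shows "\<exists>E. is_tree V E \<and> single_crossing_wrt V E A P"
proof -
  have iV: "i \<in> V" using pl unfolding potential_leaf_def by blast
  have "\<exists>k\<in>V. k \<noteq> i \<and> (\<forall>a\<in>A. \<forall>b\<in>A.
        (a, b) \<notin> S_set V A P i \<and> (b, a) \<notin> S_set V A P i \<longrightarrow>
          ((a, b) \<in> P i \<longleftrightarrow> (a, b) \<in> P k))" using pl unfolding potential_leaf_def by (elim conjE)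
  then obtain k where kV: "k \<in> V" and ki: "k \<noteq> i" and agree: "\<forall>a\<in>A. \<forall>b\<in>A.
        (a, b) \<notin> S_set V A P i \<and> (b, a) \<notin> S_set V A P i \<longrightarrow>
          ((a, b) \<in> P i \<longleftrightarrow> (a, b) \<in> P k)" by (elim bexE conjE)
  have finV': "finite (V - {i})" and graph': "is_graph (V-{i}) E'" and conn': "connected_graph (V-{i}) E'"
    and acyc': "\<forall>u v. {u, v} \<in> E' \<longrightarrow> \<not> reach (E' - {{u, v}}) u v"
    using T' unfolding is_tree_def by blast+
  have finV: "finite V" using finV' by simp
  have noi: "\<forall>e\<in>E'. i \<notin> e"
  proof
    fix e assume "e \<in> E'"
    then obtain p q where "p \<in> V - {i}" "q \<in> V - {i}" "e = {p,q}"
      using graph' unfolding is_graph_def by blast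
    then show "i \<notin> e" by auto
  qed
  have notin: "{i,k} \<notin> E'" using noi by blast
  define E where "E = insert {i,k} E'"
  have EmE': "E - {{i,k}} = E'" using notin by (auto simp: E_def)
  have Em: "\<And>x y. {x,y} \<in> E' \<Longrightarrow> E - {{x,y}} = insert {i,k} (E' - {{x,y}})"
    using notin unfolding E_def by auto
  have ki': "k \<in> V - {i}" using kV ki by simp
  have isol: "\<And>w. reach E' i w \<Longrightarrow> w = i" using reach_isolated[OF noi] by blast
  have isol2: "\<And>w. reach E' w i \<Longrightarrow> w = i"
  proof -
    fix w assume "reach E' w i"
    then have "reach E' i w" by (rule reach_sym)
    then show "w = i" by (rule isol)
  qed
  have toK: "\<forall>x\<in>V. reach E x k"
  proof
    fix x assume "x \<in> V"
    show "reach E x k"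
    proof (cases "x = i")
      case True then show ?thesis by (simp add: reach_edge E_def)
    next
      case False
      hence "reach E' x k" using conn' \<open>x \<in> V\<close> ki' by (auto simp: connected_graph_def)
      then show ?thesis by (rule reach_mono[rotated]) (auto simp: E_def)
    qed
  qed
  have tree: "is_tree V E"
    unfolding is_tree_def
  proof (intro conjI)
    show "finite V" using finV by simp
    show "V \<noteq> {}" using iV by auto
    show "is_graph V E" unfolding is_graph_def
    proof
      fix e assume "e \<in> E"
      then consider "e = {i,k}" | "e \<in> E'" by (auto simp: E_def)
      then show "\<exists>u\<in>V. \<exists>v\<in>V. u \<noteq> v \<and> e = {u, v}"
      proof cases
        case 1 then show ?thesis using iV kV ki by (intro bexI[of _ i] bexI[of _ k]) auto
      next
        case 2
        then obtain p q where "p \<in> V - {i}" "q \<in> V - {i}" "p \<noteq> q" "e = {p,q}"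
          using graph' unfolding is_graph_def by blast
        then show ?thesis by (intro bexI[of _ p] bexI[of _ q]) auto
      qed
    qed
    show "connected_graph V E" unfolding connected_graph_def
    proof (intro ballI)
      fix x y assume "x \<in> V" "y \<in> V"
      have "reach E y k" using toK \<open>y \<in> V\<close> by blast
      then have "reach E k y" by (rule reach_sym)
      have "reach E x k" using toK \<open>x \<in> V\<close> by blast
      then show "reach E x y" using \<open>reach E k y\<close> by (rule reach_trans)
    qed
    show "\<forall>u v. {u, v} \<in> E \<longrightarrow> \<not> reach (E - {{u, v}}) u v"
    proof (intro allI impI notI)
      fix x y assume xyE: "{x,y} \<in> E" and r: "reach (E - {{x,y}}) x y"
      show False
      proof (cases "{x,y} = {i,k}")
        case True
        hence "reach E' x y" using r EmE' by simp
        from True have "(x = i \<and> y = k) \<or> (x = k \<and> y = i)" by (auto simp: doubleton_eq_iff)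
        then show False
        proof
          assume "x = i \<and> y = k"
          then have "reach E' i k" using \<open>reach E' x y\<close> by simp
          then have "k = i" by (rule isol)
          then show False using ki by simp
        next
          assume "x = k \<and> y = i"
          then have "reach E' k i" using \<open>reach E' x y\<close> by simp
          then have "k = i" by (rule isol2)
          then show False using ki by simp
        qed
      next
        case False
        hence xyE': "{x,y} \<in> E'" using xyE by (simp add: E_def)
        hence "x \<noteq> i" "y \<noteq> i" using noi by auto
        have noi2: "\<forall>e\<in>E' - {{x,y}}. i \<notin> e" using noi by blast
        have "reach (insert {i,k} (E' - {{x,y}})) x y" using r Em[OF xyE'] by simp
        from reach_proj[OF noi2 this] have "reach (E' - {{x,y}}) x y"
          using \<open>x \<noteq> i\<close> \<open>y \<noteq> i\<close> by simp
        then show False using acyc' xyE' by blast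
      qed
    qed
  qed
  have compi: "component V E {i,k} i \<subseteq> {i}"
    using isol by (auto simp: component_def EmE')
  have compk: "component V E {i,k} k \<subseteq> V - {i}"
    using isol2 ki by (auto simp: component_def EmE')
  have ext: "\<And>x y z w. {x,y} \<in> E' \<Longrightarrow> z \<noteq> i \<Longrightarrow> w \<in> component V E {x,y} z \<Longrightarrow>
      (w \<noteq> i \<and> w \<in> component (V-{i}) E' {x,y} z) \<or> (w = i \<and> k \<in> component (V-{i}) E' {x,y} z)"
  proof -
    fix x y z w assume xyE': "{x,y} \<in> E'" and zi: "z \<noteq> i" and w: "w \<in> component V E {x,y} z"
    have noi2: "\<forall>e\<in>E' - {{x,y}}. i \<notin> e" using noi by blast
    have "reach (insert {i,k} (E' - {{x,y}})) z w" "w \<in> V"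
      using w Em[OF xyE'] by (auto simp: component_def)
    from reach_proj[OF noi2 this(1)] zi
    have "reach (E' - {{x,y}}) z (if w = i then k else w)" by simp
    then show "(w \<noteq> i \<and> w \<in> component (V-{i}) E' {x,y} z) \<or> (w = i \<and> k \<in> component (V-{i}) E' {x,y} z)"
      using \<open>w \<in> V\<close> ki' by (cases "w = i") (auto simp: component_def)
  qed
  have sc: "single_crossing_wrt V E A P"
    unfolding single_crossing_wrt_def
  proof (intro ballI impI)
    fix c d assume cA: "c \<in> A" and dA: "d \<in> A" and cd: "c \<noteq> d"
    have ikE: "{i,k} \<in> E" "{k,i} \<in> E" by (auto simp: E_def insert_commute)
    show "(\<exists>x y. {x, y} \<in> E \<and>
            (\<forall>w\<in>component V E {x, y} x. (c, d) \<in> P w) \<and>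
            (\<forall>w\<in>component V E {x, y} y. (d, c) \<in> P w))
      \<or> (\<forall>j\<in>V. (c, d) \<in> P j) \<or> (\<forall>j\<in>V. (d, c) \<in> P j)"
    proof (cases "(c,d) \<in> S_set V A P i")
      case True
      hence "(c,d) \<in> P i" "\<forall>j\<in>V-{i}. (d,c) \<in> P j" by (auto simp: S_set_def)
      then show ?thesis using ikE(1) compi compk by blast
    next
      case F1: False
      show ?thesis
      proof (cases "(d,c) \<in> S_set V A P i")
        case True
        hence "(d,c) \<in> P i" "\<forall>j\<in>V-{i}. (c,d) \<in> P j" by (auto simp: S_set_def)
        moreover have "component V E {k,i} i \<subseteq> {i}" "component V E {k,i} k \<subseteq> V - {i}"
          using compi compk by (simp_all add: insert_commute[of k i])
        ultimately show ?thesis using ikE(2) by blast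
      next
        case F2: False
        have ag1: "(c,d) \<in> P i \<longleftrightarrow> (c,d) \<in> P k" using agree cA dA F1 F2 by blast
        have ag2: "(d,c) \<in> P i \<longleftrightarrow> (d,c) \<in> P k" using agree cA dA F1 F2 by blast
        from sc' cA dA cd have "(\<exists>x y. {x, y} \<in> E' \<and>
            (\<forall>w\<in>component (V-{i}) E' {x, y} x. (c, d) \<in> P w) \<and>
            (\<forall>w\<in>component (V-{i}) E' {x, y} y. (d, c) \<in> P w))
          \<or> (\<forall>j\<in>V-{i}. (c, d) \<in> P j) \<or> (\<forall>j\<in>V-{i}. (d, c) \<in> P j)"
          unfolding single_crossing_wrt_def by blast
        then show ?thesis
        proof (elim disjE exE conjE)
          fix x y assume xyE': "{x,y} \<in> E'"
            and cx: "\<forall>w\<in>component (V-{i}) E' {x, y} x. (c, d) \<in> P w"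
            and cy: "\<forall>w\<in>component (V-{i}) E' {x, y} y. (d, c) \<in> P w"
          have xi: "x \<noteq> i" "y \<noteq> i" using noi xyE' by auto
          have "\<forall>w\<in>component V E {x, y} x. (c, d) \<in> P w"
            using ext[OF xyE' xi(1)] cx ag1 by blast
          moreover have "\<forall>w\<in>component V E {x, y} y. (d, c) \<in> P w"
            using ext[OF xyE' xi(2)] cy ag2 by blast
          moreover have "{x,y} \<in> E" using xyE' by (simp add: E_def)
          ultimately show ?thesis by blast
        next
          assume "\<forall>j\<in>V-{i}. (c, d) \<in> P j"
          then show ?thesis using ag1 ki' by blast
        next
          assume "\<forall>j\<in>V-{i}. (d, c) \<in> P j"
          then show ?thesis using ag2 ki' by blast
        qed
      qed
    qed
  qed
  show ?thesis using tree sc by blast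
qed

theorem lemma2:
  fixes n :: nat and A :: "'a set" and P :: "nat \<Rightarrow> ('a \<times> 'a) set" and i :: nat
  assumes "finite A"
    and "profile {1..n} A P"
    and "potential_leaf {1..n} A P i"
  shows "(\<exists>E. is_tree {1..n} E \<and> single_crossing_wrt {1..n} E A P)
     \<longleftrightarrow> (\<exists>E. is_tree ({1..n} - {i}) E \<and> single_crossing_wrt ({1..n} - {i}) E A P)"
  using forward[OF assms(2,3)] backward[OF assms(2,3)] by blast

end
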